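(* Let $(\Omega,\mathcal{F},\Pr)$ be a probability space and let $Y_i\colon\Omega\to\mathbb{R}$ and $W_i\colon\Omega\to\{0,1\}$, $i\ge 1$, be random variables. Define $X_i=(1-2W_i)Y_i$ and $S_n=\sum_{i=1}^n X_i$ for $n\ge 1$. Suppose that Assumption 1 holds, i.e. the experiment subjects generating the events are assigned to control or treatment uniformly at random with equal probability. Suppose also that the null hypothesis holds: (a) the families $\{Y_1,Y_2,\ldots\}$ and $\{W_1,W_2,\ldots\}$ are independent of each other, and (b) $\Pr\{W_i=1\}=0.5$ for all $i\ge 1$. Then for any $N\ge 1$ and any $k\in\{1,\ldots,N\}$, the conditional distribution of $S_N-S_k$ given $S_1,\ldots,S_k$ is symmetric around $0$.
   Context: Setting: a randomised experiment with a control group and a treatment group. Subjects (e.g. users) generate a stream of events (e.g. orders). For the $i$-th event, $Y_i$ is its outcome (e.g. order value) and $W_i$ is its assignment indicator ($W_i=0$ if the event was generated by a subject in the control group, $W_i=1$ if by a subject in the treatment group). Thus $S_n$ is the difference (control minus treatment) in the accumulated metric after $n$ events. The variables $Y_i$ may be dependent among themselves and need not be identically distributed; likewise the $W_i$ may be dependent among themselves (events of the same subject). Under Assumption 1 together with the null hypothesis, for every sign pattern of the assignments of any block of events, the pattern and its negation have equal probability. *)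

theory Defs
  imports "HOL-Probability.Probability"
begin

definition Xev :: "(nat \<Rightarrow> 'a \<Rightarrow> real) \<Rightarrow> (nat \<Rightarrow> 'a \<Rightarrow> real) \<Rightarrow> nat \<Rightarrow> 'a \<Rightarrow> real" where
  "Xev Y W i \<omega> = (1 - 2 * W i \<omega>) * Y i \<omega>"

definition Ssum :: "(nat \<Rightarrow> 'a \<Rightarrow> real) \<Rightarrow> (nat \<Rightarrow> 'a \<Rightarrow> real) \<Rightarrow> nat \<Rightarrow> 'a \<Rightarrow> real" where
  "Ssum Y W n \<omega> = (\<Sum>i\<in>{1..n}. Xev Y W i \<omega>)"

text \<open>Assumption 1 (with the null hypothesis): for every n, every block of events {a..b}
  within {1..n} and every 0/1 pattern w of the assignments W_1..W_n, the pattern and the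
  pattern negated on the block have equal probability.\<close>
definition assumption1 :: "'a measure \<Rightarrow> (nat \<Rightarrow> 'a \<Rightarrow> real) \<Rightarrow> bool" where
  "assumption1 M W \<longleftrightarrow>
     (\<forall>n a b (w::nat \<Rightarrow> real). 1 \<le> a \<and> b \<le> n \<and> (\<forall>i. w i \<in> {0,1}) \<longrightarrow>
        measure M {\<omega>\<in>space M. \<forall>i\<in>{1..n}. W i \<omega> = w i} =
        measure M {\<omega>\<in>space M. \<forall>i\<in>{1..n}. W i \<omega> = (if a \<le> i \<and> i \<le> b then 1 - w i else w i)})"

definition sigmaS :: "'a measure \<Rightarrow> (nat \<Rightarrow> 'a \<Rightarrow> real) \<Rightarrow> (nat \<Rightarrow> 'a \<Rightarrow> real) \<Rightarrow> nat \<Rightarrow> 'a measure" where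
  "sigmaS M Y W k = vimage_algebra (space M) (\<lambda>\<omega>. \<lambda>i\<in>{1..k}. Ssum Y W i \<omega>) (PiM {1..k} (\<lambda>_. borel))"

end

theory Submission
  imports Defs
begin

lemma G_meas:
  fixes N j :: nat
  assumes "j \<le> N"
  shows "(\<lambda>p. \<Sum>i\<in>{1..j}. (1 - 2 * snd p i) * fst p i :: real) \<in>
     borel_measurable (PiM {1..N} (\<lambda>_. borel) \<Otimes>\<^sub>M PiM {1..N} (\<lambda>_. borel))"
proof (rule borel_measurable_sum)
  fix i assume "i \<in> {1..j}"
  then have i: "i \<in> {1..N}" using assms by auto
  show "(\<lambda>p. (1 - 2 * snd p i) * fst p i :: real) \<in>
     borel_measurable (PiM {1..N} (\<lambda>_. borel) \<Otimes>\<^sub>M PiM {1..N} (\<lambda>_. borel))"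
    using i by measurable
qed

lemma H_meas:
  fixes N k :: nat
  shows "(\<lambda>p. \<Sum>i\<in>{k<..N}. (1 - 2 * snd p i) * fst p i :: real) \<in>
     borel_measurable (PiM {1..N} (\<lambda>_. borel) \<Otimes>\<^sub>M PiM {1..N} (\<lambda>_. borel))"
proof (rule borel_measurable_sum)
  fix i assume "i \<in> {k<..N}"
  then have i: "i \<in> {1..N}" by auto
  show "(\<lambda>p. (1 - 2 * snd p i) * fst p i :: real) \<in>
     borel_measurable (PiM {1..N} (\<lambda>_. borel) \<Otimes>\<^sub>M PiM {1..N} (\<lambda>_. borel))"
    using i by measurable
qed

lemma Ssum_meas:
  assumes "\<And>i. i \<ge> 1 \<Longrightarrow> Y i \<in> borel_measurable M"
    and "\<And>i. i \<ge> 1 \<Longrightarrow> W i \<in> borel_measurable M"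
  shows "Ssum Y W j \<in> borel_measurable M"
proof -
  have "(\<lambda>\<omega>. \<Sum>i\<in>{1..j}. Xev Y W i \<omega>) \<in> borel_measurable M"
  proof (rule borel_measurable_sum)
    fix i assume "i \<in> {1..j}"
    then have [measurable]: "Y i \<in> borel_measurable M" "W i \<in> borel_measurable M" using assms by auto
    show "Xev Y W i \<in> borel_measurable M" unfolding Xev_def[abs_def] by measurable
  qed
  then show ?thesis unfolding Ssum_def[abs_def] .
qed

lemma flip_distr:
  fixes M :: "'a measure" and W :: "nat \<Rightarrow> 'a \<Rightarrow> real" and k N :: nat
  assumes P: "prob_space M"
    and W_rv: "\<And>i. i \<ge> 1 \<Longrightarrow> W i \<in> borel_measurable M"
    and W_01: "\<And>i \<omega>. i \<ge> 1 \<Longrightarrow> \<omega> \<in> space M \<Longrightarrow> W i \<omega> \<in> {0, 1}"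
    and A1: "assumption1 M W"
  defines "Wf \<equiv> (\<lambda>\<omega>. \<lambda>i\<in>{1..N}. W i \<omega>)"
    and "fl \<equiv> (\<lambda>w::nat\<Rightarrow>real. \<lambda>i\<in>{1..N}. if k < i then 1 - w i else w i)"
  shows "distr M (PiM {1..N} (\<lambda>_. borel)) Wf = distr M (PiM {1..N} (\<lambda>_. borel)) (\<lambda>\<omega>. fl (Wf \<omega>))"
proof -
  interpret prob_space M by fact
  let ?P = "PiM {1..N} (\<lambda>_. borel :: real measure)"
  have Wf_m: "Wf \<in> measurable M ?P" unfolding Wf_def
    by (rule measurable_restrict) (auto intro: W_rv)
  have fl_m: "fl \<in> measurable ?P ?P" unfolding fl_def by measurable
  define PP where "PP = PiE {1..N} (\<lambda>_. {0,1::real})"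
  have finPP: "finite PP" unfolding PP_def by (simp add: finite_PiE)
  have WP: "\<And>\<omega>. \<omega> \<in> space M \<Longrightarrow> Wf \<omega> \<in> PP" using W_01 by (auto simp: Wf_def PP_def)
  have flP: "\<And>w. w \<in> PP \<Longrightarrow> fl w \<in> PP" by (auto simp: fl_def PP_def PiE_iff)
  have flfl: "\<And>w. w \<in> PP \<Longrightarrow> fl (fl w) = w" by (auto simp: fl_def PP_def fun_eq_iff PiE_def extensional_def)
  define E where "E w = {\<omega>\<in>space M. \<forall>i\<in>{1..N}. W i \<omega> = w i}" for w :: "nat \<Rightarrow> real"
  have Esets: "E w \<in> sets M" for w
    unfolding E_def
  proof (rule sets.sets_Collect_finite_All)
    fix i assume "i \<in> {1..N}"
    then have [measurable]: "W i \<in> borel_measurable M" using W_rv by auto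
    show "{\<omega> \<in> space M. W i \<omega> = w i} \<in> sets M" by measurable
  qed simp
  have Esp: "E w \<subseteq> space M" for w by (auto simp: E_def)
  have WfE: "\<And>\<omega> w. w \<in> PP \<Longrightarrow> \<omega> \<in> space M \<Longrightarrow> Wf \<omega> = w \<longleftrightarrow> \<omega> \<in> E w"
    by (auto simp: E_def Wf_def PP_def fun_eq_iff PiE_def extensional_def)
  have Eeq: "measure M (E (fl w)) = measure M (E w)" if w: "w \<in> PP" for w
  proof -
    define w0 where "w0 i = (if w i = 1 then 1 else (0::real))" for i
    have w0w: "\<And>i. i \<in> {1..N} \<Longrightarrow> w0 i = w i"
    proof -
      fix i assume "i \<in> {1..N}"
      then have "w i \<in> {0,1}" using w unfolding PP_def by blast
      then show "w0 i = w i" by (auto simp: w0_def)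
    qed
    have "measure M {\<omega>\<in>space M. \<forall>i\<in>{1..N}. W i \<omega> = w0 i} =
        measure M {\<omega>\<in>space M. \<forall>i\<in>{1..N}. W i \<omega> = (if k+1 \<le> i \<and> i \<le> N then 1 - w0 i else w0 i)}"
    proof -
      have "\<forall>i. w0 i \<in> {0,1}" by (simp add: w0_def)
      moreover have "\<forall>w::nat\<Rightarrow>real. 1 \<le> k+1 \<and> N \<le> N \<and> (\<forall>i. w i \<in> {0,1}) \<longrightarrow>
        measure M {\<omega>\<in>space M. \<forall>i\<in>{1..N}. W i \<omega> = w i} =
        measure M {\<omega>\<in>space M. \<forall>i\<in>{1..N}. W i \<omega> = (if k+1 \<le> i \<and> i \<le> N then 1 - w i else w i)}"
        using A1 unfolding assumption1_def by blast
      moreover have "(1::nat) \<le> k+1" "N \<le> N" by simp_all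
      ultimately show ?thesis by blast
    qed
    moreover have "{\<omega>\<in>space M. \<forall>i\<in>{1..N}. W i \<omega> = w0 i} = E w"
      using w0w by (auto simp: E_def)
    moreover have "{\<omega>\<in>space M. \<forall>i\<in>{1..N}. W i \<omega> = (if k+1 \<le> i \<and> i \<le> N then 1 - w0 i else w0 i)} = E (fl w)"
      using w0w by (auto simp: E_def fl_def)
    ultimately show ?thesis by simp
  qed
  have main: "measure M (Wf -` A \<inter> space M) = measure M ((\<lambda>\<omega>. fl (Wf \<omega>)) -` A \<inter> space M)" for A
  proof -
    have U1: "Wf -` A \<inter> space M = (\<Union>w\<in>A\<inter>PP. E w)"
      using WP WfE by (auto simp: E_def) (metis IntI)
    have U2: "(\<lambda>\<omega>. fl (Wf \<omega>)) -` A \<inter> space M = (\<Union>w\<in>A\<inter>PP. E (fl w))"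
    proof (intro equalityI subsetI)
      fix \<omega> assume "\<omega> \<in> (\<lambda>\<omega>. fl (Wf \<omega>)) -` A \<inter> space M"
      then have om: "\<omega> \<in> space M" "fl (Wf \<omega>) \<in> A" by auto
      show "\<omega> \<in> (\<Union>w\<in>A\<inter>PP. E (fl w))"
      proof (intro UN_I[of "fl (Wf \<omega>)"])
        show "fl (Wf \<omega>) \<in> A \<inter> PP" using WP flP om by auto
        show "\<omega> \<in> E (fl (fl (Wf \<omega>)))" using WP flfl WfE om by metis
      qed
    next
      fix \<omega> assume "\<omega> \<in> (\<Union>w\<in>A\<inter>PP. E (fl w))"
      then obtain w where w: "w \<in> A" "w \<in> PP" "\<omega> \<in> E (fl w)" by auto
      then have om: "\<omega> \<in> space M" by (auto simp: E_def)
      then have "Wf \<omega> = fl w" using WfE[of "fl w" \<omega>] flP w by auto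
      then show "\<omega> \<in> (\<lambda>\<omega>. fl (Wf \<omega>)) -` A \<inter> space M" using om w flfl by auto
    qed
    have d1: "disjoint_family_on E (A \<inter> PP)"
      unfolding disjoint_family_on_def
    proof (intro ballI impI)
      fix v w assume "v \<in> A \<inter> PP" "w \<in> A \<inter> PP" "v \<noteq> w"
      then show "E v \<inter> E w = {}" using WfE Esp by (metis IntE disjoint_iff subsetD)
    qed
    have d2: "disjoint_family_on (\<lambda>w. E (fl w)) (A \<inter> PP)"
      unfolding disjoint_family_on_def
    proof (intro ballI impI)
      fix v w assume "v \<in> A \<inter> PP" "w \<in> A \<inter> PP" "v \<noteq> w"
      then have vw: "v \<in> PP" "w \<in> PP" "v \<noteq> w" by auto
      have "fl v \<in> PP" "fl w \<in> PP" using flP vw by auto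
      have "fl v \<noteq> fl w"
      proof
        assume "fl v = fl w"
        then have "fl (fl v) = fl (fl w)" by simp
        then show False using flfl vw by simp
      qed
      show "E (fl v) \<inter> E (fl w) = {}"
      proof (rule ccontr)
        assume "E (fl v) \<inter> E (fl w) \<noteq> {}"
        then obtain \<omega> where om: "\<omega> \<in> E (fl v)" "\<omega> \<in> E (fl w)" by blast
        then have "\<omega> \<in> space M" using Esp by blast
        then have "Wf \<omega> = fl v" "Wf \<omega> = fl w" using WfE om \<open>fl v \<in> PP\<close> \<open>fl w \<in> PP\<close> by auto
        then show False using \<open>fl v \<noteq> fl w\<close> by simp
      qed
    qed
    have "measure M (Wf -` A \<inter> space M) = (\<Sum>w\<in>A\<inter>PP. measure M (E w))"
      unfolding U1 using finPP d1 Esets by (intro measure_finite_Union) auto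
    also have "\<dots> = (\<Sum>w\<in>A\<inter>PP. measure M (E (fl w)))"
      using Eeq by (intro sum.cong) auto
    also have "\<dots> = measure M ((\<lambda>\<omega>. fl (Wf \<omega>)) -` A \<inter> space M)"
      unfolding U2 using finPP d2 Esets by (intro measure_finite_Union[symmetric]) auto
    finally show ?thesis .
  qed
  show ?thesis
  proof (rule measure_eqI)
    fix A assume "A \<in> sets (distr M ?P Wf)"
    then have A: "A \<in> sets ?P" by simp
    have m2: "(\<lambda>\<omega>. fl (Wf \<omega>)) \<in> measurable M ?P" using Wf_m fl_m by (rule measurable_compose)
    show "emeasure (distr M ?P Wf) A = emeasure (distr M ?P (\<lambda>\<omega>. fl (Wf \<omega>))) A"
      using main[of A] A Wf_m m2
      by (simp add: emeasure_distr emeasure_eq_measure measurable_sets)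
  qed simp
qed

theorem lemma1:
  fixes M :: "'a measure" and Y W :: "nat \<Rightarrow> 'a \<Rightarrow> real"
  assumes "prob_space M"
    and Y_rv: "\<And>i. i \<ge> 1 \<Longrightarrow> Y i \<in> borel_measurable M"
    and W_rv: "\<And>i. i \<ge> 1 \<Longrightarrow> W i \<in> borel_measurable M"
    and W_01: "\<And>i \<omega>. i \<ge> 1 \<Longrightarrow> \<omega> \<in> space M \<Longrightarrow> W i \<omega> \<in> {0, 1}"
    and A1: "assumption1 M W"
    and H0_indep: "prob_space.indep_var M
                     (PiM {1..} (\<lambda>_. borel)) (\<lambda>\<omega>. \<lambda>i\<in>{1..}. Y i \<omega>)
                     (PiM {1..} (\<lambda>_. borel)) (\<lambda>\<omega>. \<lambda>i\<in>{1..}. W i \<omega>)"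
    and H0_half: "\<And>i. i \<ge> 1 \<Longrightarrow> measure M {\<omega>\<in>space M. W i \<omega> = 1} = 1/2"
    and "1 \<le> k" and "k \<le> N"
    and B: "B \<in> sets borel"
  shows "AE \<omega> in M.
           real_cond_exp M (sigmaS M Y W k)
             (indicator {\<omega>\<in>space M. Ssum Y W N \<omega> - Ssum Y W k \<omega> \<in> B}) \<omega>
         = real_cond_exp M (sigmaS M Y W k)
             (indicator {\<omega>\<in>space M. - (Ssum Y W N \<omega> - Ssum Y W k \<omega>) \<in> B}) \<omega>"
proof -
  interpret prob_space M by fact
  let ?P = "PiM {1..N} (\<lambda>_. borel :: real measure)"
  let ?Q = "PiM {1..k} (\<lambda>_. borel :: real measure)"
  define Yf where "Yf = (\<lambda>\<omega>. \<lambda>i\<in>{1..N}. Y i \<omega>)"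
  define Wf where "Wf = (\<lambda>\<omega>. \<lambda>i\<in>{1..N}. W i \<omega>)"
  define fl where "fl = (\<lambda>w::nat\<Rightarrow>real. \<lambda>i\<in>{1..N}. if k < i then 1 - w i else w i)"
  have Yf_m: "Yf \<in> measurable M ?P" unfolding Yf_def
    by (rule measurable_restrict) (auto intro: Y_rv)
  have Wf_m: "Wf \<in> measurable M ?P" unfolding Wf_def
    by (rule measurable_restrict) (auto intro: W_rv)
  have fl_m: "fl \<in> measurable ?P ?P" unfolding fl_def by measurable
  have ind: "indep_var ?P Yf ?P Wf"
  proof -
    have r: "(\<lambda>x. restrict x {1..N}) \<in> measurable (PiM {1..} (\<lambda>_. borel)) ?P"
      by (rule measurable_restrict_subset) auto
    have "indep_var ?P ((\<lambda>x. restrict x {1..N}) \<circ> (\<lambda>\<omega>. \<lambda>i\<in>{1..}. Y i \<omega>))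
                    ?P ((\<lambda>x. restrict x {1..N}) \<circ> (\<lambda>\<omega>. \<lambda>i\<in>{1..}. W i \<omega>))"
      by (rule indep_var_compose[OF H0_indep r r])
    moreover have "((\<lambda>x. restrict x {1..N}) \<circ> (\<lambda>\<omega>. \<lambda>i\<in>{1..}. Y i \<omega>)) = Yf"
      by (auto simp: Yf_def fun_eq_iff)
    moreover have "((\<lambda>x. restrict x {1..N}) \<circ> (\<lambda>\<omega>. \<lambda>i\<in>{1..}. W i \<omega>)) = Wf"
      by (auto simp: Wf_def fun_eq_iff)
    ultimately show ?thesis by simp
  qed
  have ind2: "indep_var ?P Yf ?P (\<lambda>\<omega>. fl (Wf \<omega>))"
    using indep_var_compose[OF ind measurable_ident fl_m] by (simp add: comp_def id_def)
  have joint: "distr M (?P \<Otimes>\<^sub>M ?P) (\<lambda>x. (Yf x, Wf x)) = distr M (?P \<Otimes>\<^sub>M ?P) (\<lambda>x. (Yf x, fl (Wf x)))"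
  proof -
    have "distr M ?P Wf = distr M ?P (\<lambda>\<omega>. fl (Wf \<omega>))"
      unfolding Wf_def fl_def by (rule flip_distr[OF assms(1) W_rv W_01 A1])
    then show ?thesis using ind ind2 unfolding indep_var_distribution_eq by metis
  qed
  define Sv where "Sv = (\<lambda>\<omega>. \<lambda>i\<in>{1..k}. Ssum Y W i \<omega>)"
  have Ss_m[measurable]: "\<And>j. Ssum Y W j \<in> borel_measurable M"
    using Ssum_meas[OF Y_rv W_rv] .
  have Sv_m: "Sv \<in> measurable M ?Q" unfolding Sv_def by measurable
  have setsF: "sets (sigmaS M Y W k) = {Sv -` C \<inter> space M | C. C \<in> sets ?Q}"
    unfolding sigmaS_def Sv_def[symmetric]
    by (rule sets_vimage_algebra2) (use measurable_space[OF Sv_m] in auto)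
  have subalg: "subalgebra M (sigmaS M Y W k)"
    unfolding subalgebra_def
  proof
    show "sets (sigmaS M Y W k) \<subseteq> sets M" using setsF Sv_m by (auto intro: measurable_sets)
    show "space (sigmaS M Y W k) = space M" by (simp add: sigmaS_def)
  qed
  interpret sf: sigma_finite_subalgebra M "sigmaS M Y W k"
    using subalg prob_space_imp_sigma_finite[OF prob_space_restr_to_subalg[OF subalg assms(1)]]
    by (rule sigma_finite_subalgebra.intro)
  define E1 where "E1 = {\<omega>\<in>space M. Ssum Y W N \<omega> - Ssum Y W k \<omega> \<in> B}"
  define E2 where "E2 = {\<omega>\<in>space M. - (Ssum Y W N \<omega> - Ssum Y W k \<omega>) \<in> B}"
  have [measurable]: "B \<in> sets borel" by (rule B)
  have E1s: "E1 \<in> sets M" unfolding E1_def by measurable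
  have E2s: "E2 \<in> sets M" unfolding E2_def by measurable
  have int1: "integrable M (indicator E1 :: 'a \<Rightarrow> real)"
    using E1s by (intro integrable_real_indicator) (auto simp: emeasure_eq_measure)
  have int2: "integrable M (indicator E2 :: 'a \<Rightarrow> real)"
    using E2s by (intro integrable_real_indicator) (auto simp: emeasure_eq_measure)
  have setint: "(\<integral>x\<in>A. indicator E x \<partial>M) = measure M (A \<inter> E)" if "A \<in> sets M" for A E
  proof -
    have "(\<integral>x\<in>A. indicator E x \<partial>M) = (\<integral>x. indicator (A \<inter> E) x \<partial>M)"
      unfolding set_lebesgue_integral_def by (intro Bochner_Integration.integral_cong) (auto split: split_indicator)
    also have "\<dots> = measure M (A \<inter> E \<inter> space M)" by (rule Bochner_Integration.integral_indicator)
    also have "A \<inter> E \<inter> space M = A \<inter> E" using sets.sets_into_space[OF that] by blast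
    finally show ?thesis .
  qed
  define G where "G j y w = (\<Sum>i\<in>{1..j}. (1 - 2 * w i) * y i)" for j and y w :: "nat \<Rightarrow> real"
  define H where "H y w = (\<Sum>i\<in>{k<..N}. (1 - 2 * w i) * y i)" for y w :: "nat \<Rightarrow> real"
  have YfWf: "Ssum Y W j \<omega> = G j (Yf \<omega>) (Wf \<omega>)" if "j \<le> N" for \<omega> j
    using that by (auto simp: Ssum_def Xev_def G_def Yf_def Wf_def intro!: sum.cong)
  have SvG: "Sv \<omega> = (\<lambda>i\<in>{1..k}. G i (Yf \<omega>) (Wf \<omega>))" for \<omega>
    unfolding Sv_def using YfWf \<open>k \<le> N\<close> by (intro restrict_ext) auto
  have Hfact: "Ssum Y W N \<omega> - Ssum Y W k \<omega> = H (Yf \<omega>) (Wf \<omega>)" for \<omega>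
  proof -
    have "{1..N} = {1..k} \<union> {k<..N}" using \<open>k \<le> N\<close> by auto
    then have "Ssum Y W N \<omega> = Ssum Y W k \<omega> + (\<Sum>i\<in>{k<..N}. Xev Y W i \<omega>)"
      unfolding Ssum_def by (simp only:) (rule sum.union_disjoint, auto)
    moreover have "(\<Sum>i\<in>{k<..N}. Xev Y W i \<omega>) = H (Yf \<omega>) (Wf \<omega>)"
      unfolding H_def Xev_def Yf_def Wf_def using \<open>1 \<le> k\<close> by (intro sum.cong) auto
    ultimately show ?thesis by simp
  qed
  have Gfl: "G j y (fl w) = G j y w" if "j \<le> k" for j y w
    unfolding G_def fl_def using that \<open>k \<le> N\<close> by (intro sum.cong) auto
  have Hfl: "H y (fl w) = - H y w" for y w
    unfolding H_def sum_negf[symmetric] fl_def using \<open>1 \<le> k\<close> by (intro sum.cong) (auto simp: algebra_simps)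
  have sp1: "(Yf \<omega>, Wf \<omega>) \<in> space (?P \<Otimes>\<^sub>M ?P)" if "\<omega> \<in> space M" for \<omega>
    using measurable_space[OF Yf_m that] measurable_space[OF Wf_m that] by (simp add: space_pair_measure)
  have sp2: "(Yf \<omega>, fl (Wf \<omega>)) \<in> space (?P \<Otimes>\<^sub>M ?P)" if "\<omega> \<in> space M" for \<omega>
    using measurable_space[OF Yf_m that] measurable_space[OF fl_m measurable_space[OF Wf_m that]]
    by (simp add: space_pair_measure)
  have V1: "(\<lambda>x. (Yf x, Wf x)) \<in> measurable M (?P \<Otimes>\<^sub>M ?P)" using Yf_m Wf_m by measurable
  have V2: "(\<lambda>x. (Yf x, fl (Wf x))) \<in> measurable M (?P \<Otimes>\<^sub>M ?P)"
    using Yf_m measurable_compose[OF Wf_m fl_m] by measurable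
  have key: "(\<integral>x\<in>A. (indicator E1 x :: real) \<partial>M) = (\<integral>x\<in>A. (indicator E2 x :: real) \<partial>M)"
    if A: "A \<in> sets (sigmaS M Y W k)" for A
  proof -
    obtain C where C: "C \<in> sets ?Q" "A = Sv -` C \<inter> space M" using A setsF by auto
    have AM: "A \<in> sets M" using A subalg by (auto simp: subalgebra_def)
    define D where "D = {p\<in>space (?P \<Otimes>\<^sub>M ?P). (\<lambda>i\<in>{1..k}. G i (fst p) (snd p)) \<in> C \<and> H (fst p) (snd p) \<in> B}"
    have Dm: "D \<in> sets (?P \<Otimes>\<^sub>M ?P)"
    proof -
      have g: "(\<lambda>p. \<lambda>i\<in>{1..k}. G i (fst p) (snd p)) \<in> measurable (?P \<Otimes>\<^sub>M ?P) ?Q"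
        unfolding G_def by (rule measurable_restrict) (use G_meas \<open>k \<le> N\<close> in auto)
      have h: "(\<lambda>p. H (fst p) (snd p)) \<in> borel_measurable (?P \<Otimes>\<^sub>M ?P)"
        unfolding H_def by (rule H_meas)
      have "D = ((\<lambda>p. \<lambda>i\<in>{1..k}. G i (fst p) (snd p)) -` C \<inter> space (?P \<Otimes>\<^sub>M ?P))
               \<inter> ((\<lambda>p. H (fst p) (snd p)) -` B \<inter> space (?P \<Otimes>\<^sub>M ?P))"
        unfolding D_def by auto
      then show ?thesis using measurable_sets[OF g C(1)] measurable_sets[OF h B] by auto
    qed
    have pre1: "(\<lambda>x. (Yf x, Wf x)) -` D \<inter> space M = A \<inter> E1"
      unfolding D_def C(2) E1_def using sp1 SvG Hfact by auto
    have pre2: "(\<lambda>x. (Yf x, fl (Wf x))) -` D \<inter> space M = A \<inter> E2"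
    proof -
      have "(\<lambda>i\<in>{1..k}. G i (Yf \<omega>) (fl (Wf \<omega>))) = Sv \<omega>" for \<omega>
        unfolding SvG using Gfl by (intro restrict_ext) auto
      then show ?thesis
        unfolding D_def C(2) E2_def using sp2 Hfact Hfl by auto
    qed
    have "(\<integral>x\<in>A. indicator E1 x \<partial>M) = measure M (A \<inter> E1)" by (rule setint[OF AM])
    also have "\<dots> = measure (distr M (?P \<Otimes>\<^sub>M ?P) (\<lambda>x. (Yf x, Wf x))) D"
      unfolding pre1[symmetric] by (rule measure_distr[OF V1 Dm, symmetric])
    also have "\<dots> = measure (distr M (?P \<Otimes>\<^sub>M ?P) (\<lambda>x. (Yf x, fl (Wf x)))) D"
      by (simp only: joint)
    also have "\<dots> = measure M (A \<inter> E2)"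
      unfolding pre2[symmetric] by (rule measure_distr[OF V2 Dm])
    also have "\<dots> = (\<integral>x\<in>A. indicator E2 x \<partial>M)" by (rule setint[OF AM, symmetric])
    finally show ?thesis .
  qed
  have "AE x in M. real_cond_exp M (sigmaS M Y W k) (indicator E1) x
                 = real_cond_exp M (sigmaS M Y W k) (indicator E2) x"
  proof (rule sf.real_cond_exp_charact)
    fix A assume "A \<in> sets (sigmaS M Y W k)"
    then show "(\<integral>x\<in>A. indicator E1 x \<partial>M) = (\<integral>x\<in>A. real_cond_exp M (sigmaS M Y W k) (indicator E2) x \<partial>M)"
      using key sf.real_cond_exp_intA[OF int2] by simp
  qed (use int1 int2 in auto)
  then show ?thesis unfolding E1_def E2_def .
qed

end
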